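(* Let $G$ be a graph on at least two vertices and let $\overline{G}$ be its complement. Then $|\gamma^{DLD}(G)-\gamma^{DLD}(\overline{G})|\le 1$, and $\gamma^{DLD}(G)\ne\gamma^{DLD}(\overline{G})$ if and only if $G$ is a complete graph or an edgeless graph.
   Context: All graphs are finite, simple and undirected (not necessarily connected). For $u\in V$, $N(u)$ is the set of neighbours of $u$ and $N[u]=N(u)\cup\{u\}$. A code is a non-empty subset $C\subseteq V$; $I(C;u)=N[u]\cap C$ (computed in the relevant graph). A code $C$ is solid-locating-dominating if $I(C;u)\ne\emptyset$ for every $u\in V\setminus C$ and $I(C;u)\not\subseteq I(C;v)$ for all distinct $u,v\in V\setminus C$; $\gamma^{DLD}(G)$ is the minimum size of such a code in $G$. *)

theory Defs
  imports Main
begin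

definition simple_graph :: "'a set \<Rightarrow> ('a \<Rightarrow> 'a \<Rightarrow> bool) \<Rightarrow> bool" where
  "simple_graph V E \<longleftrightarrow> finite V \<and> (\<forall>u v. E u v \<longrightarrow> u \<in> V \<and> v \<in> V)
     \<and> (\<forall>u v. E u v \<longrightarrow> E v u) \<and> (\<forall>u. \<not> E u u)"

definition complement :: "'a set \<Rightarrow> ('a \<Rightarrow> 'a \<Rightarrow> bool) \<Rightarrow> ('a \<Rightarrow> 'a \<Rightarrow> bool)" where
  "complement V E = (\<lambda>u v. u \<in> V \<and> v \<in> V \<and> u \<noteq> v \<and> \<not> E u v)"

definition closed_nbhd :: "'a set \<Rightarrow> ('a \<Rightarrow> 'a \<Rightarrow> bool) \<Rightarrow> 'a \<Rightarrow> 'a set" where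
  "closed_nbhd V E u = {v \<in> V. E u v} \<union> {u}"

definition I_set :: "'a set \<Rightarrow> ('a \<Rightarrow> 'a \<Rightarrow> bool) \<Rightarrow> 'a set \<Rightarrow> 'a \<Rightarrow> 'a set" where
  "I_set V E C u = closed_nbhd V E u \<inter> C"

definition is_DLD_code :: "'a set \<Rightarrow> ('a \<Rightarrow> 'a \<Rightarrow> bool) \<Rightarrow> 'a set \<Rightarrow> bool" where
  "is_DLD_code V E C \<longleftrightarrow> C \<noteq> {} \<and> C \<subseteq> V
     \<and> (\<forall>u \<in> V - C. I_set V E C u \<noteq> {})
     \<and> (\<forall>u \<in> V - C. \<forall>v \<in> V - C. u \<noteq> v \<longrightarrow> \<not> (I_set V E C u \<subseteq> I_set V E C v))"

definition gamma_DLD :: "'a set \<Rightarrow> ('a \<Rightarrow> 'a \<Rightarrow> bool) \<Rightarrow> nat" where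
  "gamma_DLD V E = (LEAST k. \<exists>C. is_DLD_code V E C \<and> card C = k)"

definition is_complete :: "'a set \<Rightarrow> ('a \<Rightarrow> 'a \<Rightarrow> bool) \<Rightarrow> bool" where
  "is_complete V E \<longleftrightarrow> (\<forall>u\<in>V. \<forall>v\<in>V. u \<noteq> v \<longrightarrow> E u v)"

definition is_edgeless :: "'a set \<Rightarrow> ('a \<Rightarrow> 'a \<Rightarrow> bool) \<Rightarrow> bool" where
  "is_edgeless V E \<longleftrightarrow> (\<forall>u\<in>V. \<forall>v\<in>V. \<not> E u v)"

end

theory Submission
  imports Defs
begin

lemma I_set_eq:
  assumes "C \<subseteq> V" "u \<notin> C"
  shows "I_set V E C u = {v\<in>C. E u v}"
  using assms unfolding I_set_def closed_nbhd_def by auto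

lemma I_set_compl:
  assumes "C \<subseteq> V" "u \<notin> C" "u \<in> V"
  shows "I_set V (complement V E) C u = C - I_set V E C u"
  using assms unfolding I_set_def closed_nbhd_def complement_def by auto

lemma cc_DLD:
  "is_DLD_code V (complement V (complement V E)) C = is_DLD_code V E C"
proof -
  have "\<And>u. u \<in> V \<Longrightarrow> I_set V (complement V (complement V E)) C u = I_set V E C u"
    unfolding I_set_def closed_nbhd_def complement_def by auto
  then show ?thesis unfolding is_DLD_code_def by simp
qed

lemma DLD_to_compl:
  assumes "finite V" "card (V - C) \<ge> 2" "is_DLD_code V E C"
  shows "is_DLD_code V (complement V E) C"
proof -
  have CV: "C \<subseteq> V" "C \<noteq> {}" using assms(3) unfolding is_DLD_code_def by auto
  have dom: "\<forall>u \<in> V - C. I_set V E C u \<noteq> {}"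
   and sep: "\<forall>u \<in> V - C. \<forall>v \<in> V - C. u \<noteq> v \<longrightarrow> \<not> (I_set V E C u \<subseteq> I_set V E C v)"
    using assms(3) unfolding is_DLD_code_def by auto
  have sub: "\<And>u. u \<in> V - C \<Longrightarrow> I_set V E C u \<subseteq> C" unfolding I_set_def by auto
  have d2: "I_set V (complement V E) C u \<noteq> {}" if u: "u \<in> V - C" for u
  proof -
    have "\<exists>v. v \<in> V - C \<and> v \<noteq> u"
    proof (rule ccontr)
      assume "\<not> ?thesis"
      then have "V - C \<subseteq> {u}" by auto
      then have "card (V - C) \<le> 1"
        using card_mono[of "{u}" "V - C"] by simp
      then show False using assms(2) by simp
    qed
    then obtain v where v: "v \<in> V - C" "v \<noteq> u" by auto
    then have "\<not> I_set V E C v \<subseteq> I_set V E C u" using sep u by auto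
    then have "I_set V E C u \<noteq> C" using sub[OF v(1)] by auto
    then show ?thesis using I_set_compl[OF CV(1)] u sub[OF u] by auto
  qed
  have s2: "\<not> (I_set V (complement V E) C u \<subseteq> I_set V (complement V E) C v)"
    if "u \<in> V - C" "v \<in> V - C" "u \<noteq> v" for u v
  proof -
    have "\<not> I_set V E C v \<subseteq> I_set V E C u" using sep that by auto
    then show ?thesis using I_set_compl[OF CV(1)] that sub[OF that(1)] sub[OF that(2)] by auto
  qed
  show ?thesis unfolding is_DLD_code_def using CV d2 s2 by auto
qed

lemma DLD_compl_iff:
  assumes "finite V" "card (V - C) \<ge> 2"
  shows "is_DLD_code V (complement V E) C = is_DLD_code V E C"
  using DLD_to_compl[OF assms, of E] DLD_to_compl[OF assms, of "complement V E"] cc_DLD by metis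

lemma DLD_remove:
  assumes "u \<in> V" "finite V" "card V \<ge> 2"
  shows "is_DLD_code V E (V - {u}) = (\<exists>v\<in>V. v \<noteq> u \<and> E u v)"
proof -
  have ne: "V - {u} \<noteq> {}"
  proof
    assume "V - {u} = {}"
    then have "V \<subseteq> {u}" by auto
    then have "card V \<le> 1" using card_mono[of "{u}" V] by simp
    then show False using assms by simp
  qed
  have "V - (V - {u}) = {u}" using assms by auto
  moreover have "I_set V E (V - {u}) u = {v\<in>V. v \<noteq> u \<and> E u v}"
    unfolding I_set_def closed_nbhd_def by auto
  ultimately show ?thesis unfolding is_DLD_code_def using ne by auto
qed

lemma edgeless_code:
  assumes "is_edgeless V E" "is_DLD_code V E C"
  shows "C = V"
proof (rule ccontr)
  assume "C \<noteq> V"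
  moreover have "C \<subseteq> V" using assms(2) unfolding is_DLD_code_def by auto
  ultimately obtain u where u: "u \<in> V - C" by auto
  have "I_set V E C u = {}" using u assms(1) unfolding I_set_def closed_nbhd_def is_edgeless_def by auto
  then show False using assms(2) u unfolding is_DLD_code_def by auto
qed

lemma least_same:
  fixes P Q :: "nat \<Rightarrow> bool" and N j :: nat
  assumes "\<forall>k\<le>N. P k = Q k" "P j" "j \<le> N"
  shows "(LEAST k. P k) = (LEAST k. Q k)"
proof -
  have a: "(LEAST k. P k) \<le> j" using assms(2) by (rule Least_le)
  have pl: "P (LEAST k. P k)" using assms(2) by (rule LeastI)
  then have ql: "Q (LEAST k. P k)" using assms(1) a assms(3) by auto
  have b: "(LEAST k. Q k) \<le> (LEAST k. P k)" using ql by (rule Least_le)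
  have "Q (LEAST k. Q k)" using ql by (rule LeastI)
  then have "P (LEAST k. Q k)" using assms(1) a b assms(3) by auto
  then have "(LEAST k. P k) \<le> (LEAST k. Q k)" by (rule Least_le)
  then show ?thesis using b by simp
qed

lemma gamma_big:
  assumes fin: "finite V" and n: "card V \<ge> 2"
    and nosmall: "\<forall>C. is_DLD_code V E C \<longrightarrow> card C > card V - 2"
  shows "gamma_DLD V E = (if \<exists>u\<in>V. \<exists>v\<in>V. v \<noteq> u \<and> E u v then card V - 1 else card V)"
proof -
  let ?P = "\<lambda>k. \<exists>C. is_DLD_code V E C \<and> card C = k"
  have PV: "?P (card V)"
  proof -
    obtain a where "a \<in> V" using n by fastforce
    then have "is_DLD_code V E V" unfolding is_DLD_code_def by auto
    then show ?thesis by auto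
  qed
  have P1: "?P (card V - 1) = (\<exists>u\<in>V. \<exists>v\<in>V. v \<noteq> u \<and> E u v)"
  proof
    assume "?P (card V - 1)"
    then obtain C where C: "is_DLD_code V E C" "card C = card V - 1" by auto
    have CV: "C \<subseteq> V" using C unfolding is_DLD_code_def by auto
    have "card (V - C) = 1" using C(2) CV fin n by (simp add: card_Diff_subset finite_subset)
    then obtain u where u: "V - C = {u}" using card_1_singletonE by blast
    then have "C = V - {u}" "u \<in> V" using CV by auto
    then show "\<exists>u\<in>V. \<exists>v\<in>V. v \<noteq> u \<and> E u v" using DLD_remove[OF _ fin n] C by auto
  next
    assume "\<exists>u\<in>V. \<exists>v\<in>V. v \<noteq> u \<and> E u v"
    then obtain u where u: "u \<in> V" "\<exists>v\<in>V. v \<noteq> u \<and> E u v" by auto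
    then have "is_DLD_code V E (V - {u})" using DLD_remove[OF _ fin n] by auto
    moreover have "card (V - {u}) = card V - 1" using u fin by simp
    ultimately show "?P (card V - 1)" by blast
  qed
  have lt: "\<not> ?P k" if "k < card V - 1" for k using nosmall that by auto
  show ?thesis
  proof (cases "\<exists>u\<in>V. \<exists>v\<in>V. v \<noteq> u \<and> E u v")
    case True
    then have "gamma_DLD V E = card V - 1" unfolding gamma_DLD_def
      using P1 lt by (intro Least_equality) (auto simp: not_less[symmetric])
    then show ?thesis using True by simp
  next
    case False
    have "gamma_DLD V E = card V" unfolding gamma_DLD_def
    proof (intro Least_equality)
      show "?P (card V)" by (rule PV)
      fix y assume "?P y"
      then show "card V \<le> y" using lt P1 False
        by (metis Suc_diff_1 le_neq_implies_less less_Suc_eq not_le_imp_less not_less_zero)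
    qed
    then show ?thesis by (subst if_not_P[OF False]) simp
  qed
qed

theorem mainTheorem9:
  fixes V :: "'a set" and E :: "'a \<Rightarrow> 'a \<Rightarrow> bool"
  assumes "simple_graph V E" and "card V \<ge> 2"
  shows "\<bar>int (gamma_DLD V E) - int (gamma_DLD V (complement V E))\<bar> \<le> 1
     \<and> (gamma_DLD V E \<noteq> gamma_DLD V (complement V E)
          \<longleftrightarrow> is_complete V E \<or> is_edgeless V E)"
proof -
  have fin: "finite V" and irr: "\<And>u. \<not> E u u" using assms(1) unfolding simple_graph_def by auto
  note n = assms(2)
  let ?F = "complement V E"
  let ?P = "\<lambda>k. \<exists>C. is_DLD_code V E C \<and> card C = k"
  let ?Q = "\<lambda>k. \<exists>C. is_DLD_code V ?F C \<and> card C = k"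
  have sub: "\<And>C. is_DLD_code V E' C \<Longrightarrow> C \<subseteq> V" for E' unfolding is_DLD_code_def by auto
  have small: "is_DLD_code V ?F C = is_DLD_code V E C" if "C \<subseteq> V" "card C \<le> card V - 2" for C
  proof -
    have "card (V - C) = card V - card C" using that fin by (simp add: card_Diff_subset finite_subset)
    then have "card (V - C) \<ge> 2" using that n by simp
    then show ?thesis using DLD_compl_iff[OF fin] by blast
  qed
  have PQ: "\<forall>k\<le>card V - 2. ?P k = ?Q k"
    using small sub by blast
  have edg_iff: "is_edgeless V E = (\<not> (\<exists>u\<in>V. \<exists>v\<in>V. v \<noteq> u \<and> E u v))"
    unfolding is_edgeless_def using irr by metis
  have comp_iff: "is_complete V E = (\<not> (\<exists>u\<in>V. \<exists>v\<in>V. v \<noteq> u \<and> ?F u v))"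
    unfolding is_complete_def complement_def by auto
  have comp_edg: "is_complete V E \<Longrightarrow> is_edgeless V ?F"
    unfolding is_complete_def is_edgeless_def complement_def by auto
  show ?thesis
  proof (cases "\<exists>k\<le>card V - 2. ?P k")
    case True
    then obtain j where j: "j \<le> card V - 2" "?P j" by auto
    have eq: "gamma_DLD V E = gamma_DLD V ?F" unfolding gamma_DLD_def
      by (rule least_same[OF PQ j(2) j(1)])
    obtain C where C: "is_DLD_code V E C" "card C = j" using j by auto
    have "C \<noteq> V" using C j n by auto
    then have ne: "\<not> is_edgeless V E" using edgeless_code C by blast
    have CF: "is_DLD_code V ?F C" using small sub C j by blast
    have nc: "\<not> is_complete V E" using comp_edg edgeless_code CF \<open>C \<noteq> V\<close> by blast
    show ?thesis using eq ne nc by simp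
  next
    case False
    have ns1: "\<forall>C. is_DLD_code V E C \<longrightarrow> card C > card V - 2"
      using False not_le by blast
    have ns2: "\<forall>C. is_DLD_code V ?F C \<longrightarrow> card C > card V - 2"
    proof (intro allI impI)
      fix C assume C: "is_DLD_code V ?F C"
      show "card C > card V - 2"
      proof (rule ccontr)
        assume "\<not> card C > card V - 2"
        then have le: "card C \<le> card V - 2" by simp
        then have "?Q (card C)" using C by blast
        then have "?P (card C)" using PQ le by blast
        then show False using False le by blast
      qed
    qed
    note g1 = gamma_big[OF fin n ns1]
    note g2 = gamma_big[OF fin n ns2]
    have "\<not> (is_complete V E \<and> is_edgeless V E)"
    proof
      assume a: "is_complete V E \<and> is_edgeless V E"
      have "\<not> card V \<le> Suc 0" using n by simp
      then obtain x y where "x \<in> V" "y \<in> V" "x \<noteq> y" using card_le_Suc0_iff_eq[OF fin] by blast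
      then show False using a unfolding is_complete_def is_edgeless_def by blast
    qed
    then have nb: "(\<exists>u\<in>V. \<exists>v\<in>V. v \<noteq> u \<and> E u v) \<or> (\<exists>u\<in>V. \<exists>v\<in>V. v \<noteq> u \<and> ?F u v)"
      using edg_iff comp_iff by blast
    show ?thesis
    proof (cases "\<exists>u\<in>V. \<exists>v\<in>V. v \<noteq> u \<and> E u v"; cases "\<exists>u\<in>V. \<exists>v\<in>V. v \<noteq> u \<and> ?F u v")
      assume a: "\<exists>u\<in>V. \<exists>v\<in>V. v \<noteq> u \<and> E u v" and b: "\<exists>u\<in>V. \<exists>v\<in>V. v \<noteq> u \<and> ?F u v"
      have "gamma_DLD V E = card V - 1" using g1 a by simp
      moreover have "gamma_DLD V ?F = card V - 1" using g2 b by simp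
      moreover have "\<not> is_edgeless V E" using edg_iff a by simp
      moreover have "\<not> is_complete V E" using comp_iff b by simp
      ultimately show ?thesis by simp
    next
      assume a: "\<exists>u\<in>V. \<exists>v\<in>V. v \<noteq> u \<and> E u v" and b: "\<not> (\<exists>u\<in>V. \<exists>v\<in>V. v \<noteq> u \<and> ?F u v)"
      have "gamma_DLD V E = card V - 1" using g1 a by simp
      moreover have "gamma_DLD V ?F = card V" using g2 b by (simp only: if_False)
      moreover have "is_complete V E" using comp_iff b by simp
      ultimately show ?thesis using n by simp
    next
      assume a: "\<not> (\<exists>u\<in>V. \<exists>v\<in>V. v \<noteq> u \<and> E u v)" and b: "\<exists>u\<in>V. \<exists>v\<in>V. v \<noteq> u \<and> ?F u v"
      have "gamma_DLD V E = card V" using g1 a by (simp only: if_False)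
      moreover have "gamma_DLD V ?F = card V - 1" using g2 b by simp
      moreover have "is_edgeless V E" using edg_iff a by simp
      ultimately show ?thesis using n by simp
    next
      assume a: "\<not> (\<exists>u\<in>V. \<exists>v\<in>V. v \<noteq> u \<and> E u v)" and b: "\<not> (\<exists>u\<in>V. \<exists>v\<in>V. v \<noteq> u \<and> ?F u v)"
      then show ?thesis using nb by blast
    qed
  qed
qed

end
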